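(* Let $\mathcal{S}\subset\mathbb{R}_{\ge0}$ be measurable with positive Lebesgue measure, $G$ a probability distribution on $\mathbb{R}$, and $T(G)=\int\nu\,dG/\int\delta\,dG$ a ratio functional. Let $\mathcal{I}=\mathcal{I}(|Z_1|,\dots,|Z_n|)$ be any random interval that is a function of nonnegative observations $|Z_1|,\dots,|Z_n|$. Then $$\mathbb{P}^A_G\big[T(G)\in\mathcal{I}\big]=\mathbb{P}^B_{\mathrm{Tilt}[G]}\big[\mathrm{Tilt}[T](\mathrm{Tilt}[G])\in\mathcal{I}\big],$$ where under $\mathbb{P}^A_G$ the $|Z_1|,\dots,|Z_n|$ are independently generated from the end-truncation model with prior $G$, and under $\mathbb{P}^B_{\mathrm{Tilt}[G]}$ they are independently generated from the per-unit truncation model with prior $\mathrm{Tilt}[G]$.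
   Context: $\varphi(z;\mu)$ is the $\mathrm{N}(\mu,1)$ density, $\varphi^{\mathrm{fold}}(z;\mu)=\varphi(z;\mu)+\varphi(-z;\mu)$ and $\Phi(\mathcal{S};\mu)=\int_{\mathcal{S}}\varphi^{\mathrm{fold}}(z;\mu)dz$. End-truncation model with prior $G$: $\mu\sim G$, $|Z|\mid\mu\sim|\mathrm{N}(\mu,1)|$ (folded normal), and $|Z|$ is observed only if $|Z|\in\mathcal{S}$ (each observation is a draw of $|Z|$ conditional on $|Z|\in\mathcal{S}$). Per-unit truncation model with prior $H$: $\mu\sim H$ and $|Z|\mid\mu$ has density $\varphi^{\mathrm{fold}}(z;\mu)\mathbf{1}(z\in\mathcal{S})/\Phi(\mathcal{S};\mu)$. Tilting: $\mathrm{Tilt}[G](d\mu)=\Phi(\mathcal{S};\mu)G(d\mu)/\int\Phi(\mathcal{S};\mu')G(d\mu')$, and for $T(G)=\int\nu\,dG/\int\delta\,dG$, $\mathrm{Tilt}[T](\tilde G)=\int\nu(\mu)\Phi(\mathcal{S};\mu)^{-1}\tilde G(d\mu)/\int\delta(\mu)\Phi(\mathcal{S};\mu)^{-1}\tilde G(d\mu)$ (integrals assumed well defined). *)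

theory Defs
  imports "HOL-Probability.Probability"
begin

definition phi :: "real \<Rightarrow> real \<Rightarrow> real" where
  "phi z \<mu> = normal_density \<mu> 1 z"

definition phi_fold :: "real \<Rightarrow> real \<Rightarrow> real" where
  "phi_fold z \<mu> = phi z \<mu> + phi (- z) \<mu>"

definition Phi :: "real set \<Rightarrow> real \<Rightarrow> real" where
  "Phi S \<mu> = (\<integral>z\<in>S. phi_fold z \<mu> \<partial>lborel)"

definition folded_normal :: "real \<Rightarrow> real measure" where
  "folded_normal \<mu> = density lborel (\<lambda>z. ennreal (indicator {0..} z * phi_fold z \<mu>))"

text \<open>End-truncation model, one observation: mu ~ G, |Z| | mu ~ folded normal,
  and |Z| observed conditional on |Z| in S.\<close>
definition end_trunc_obs :: "real set \<Rightarrow> real measure \<Rightarrow> real measure" where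
  "end_trunc_obs S G =
     (let M0 = bind G folded_normal
      in density M0 (\<lambda>z. indicator S z / emeasure M0 S))"

definition per_unit_obs :: "real set \<Rightarrow> real measure \<Rightarrow> real measure" where
  "per_unit_obs S H =
     bind H (\<lambda>\<mu>. density lborel (\<lambda>z. ennreal (indicator S z * phi_fold z \<mu> / Phi S \<mu>)))"

definition Tilt :: "real set \<Rightarrow> real measure \<Rightarrow> real measure" where
  "Tilt S G = density G (\<lambda>\<mu>. ennreal (Phi S \<mu> / (\<integral>\<mu>'. Phi S \<mu>' \<partial>G)))"

definition ratio_fun :: "(real \<Rightarrow> real) \<Rightarrow> (real \<Rightarrow> real) \<Rightarrow> real measure \<Rightarrow> real" where
  "ratio_fun \<nu> \<delta> G = (\<integral>\<mu>. \<nu> \<mu> \<partial>G) / (\<integral>\<mu>. \<delta> \<mu> \<partial>G)"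

definition tilt_fun :: "real set \<Rightarrow> (real \<Rightarrow> real) \<Rightarrow> (real \<Rightarrow> real) \<Rightarrow> real measure \<Rightarrow> real" where
  "tilt_fun S \<nu> \<delta> Gt =
     (\<integral>\<mu>. \<nu> \<mu> / Phi S \<mu> \<partial>Gt) / (\<integral>\<mu>. \<delta> \<mu> / Phi S \<mu> \<partial>Gt)"

end

theory Submission
  imports Defs
begin

lemma phi_neg: "phi (- z) \<mu> = normal_density (- \<mu>) 1 z"
  unfolding phi_def
  apply (simp only: normal_density_def)
  apply (simp add: power2_eq_square algebra_simps)
  done

lemma pf_eq: "phi_fold z \<mu> = normal_density \<mu> 1 z + normal_density (- \<mu>) 1 z"
  unfolding phi_fold_def phi_neg by (simp add: phi_def)

lemma pf_pos: "0 < phi_fold z \<mu>"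
  unfolding pf_eq by (simp add: add_pos_pos normal_density_pos)

lemma pf_nonneg: "0 \<le> phi_fold z \<mu>"
  using pf_pos[of z \<mu>] by simp

lemma pf_meas[measurable]: "(\<lambda>(\<mu>, z). phi_fold z \<mu>) \<in> borel_measurable (borel \<Otimes>\<^sub>M borel)"
  unfolding pf_eq normal_density_def by measurable

lemma pf_meas2[measurable]: "(\<lambda>(z, \<mu>). phi_fold z \<mu>) \<in> borel_measurable (borel \<Otimes>\<^sub>M borel)"
  unfolding pf_eq normal_density_def by measurable

lemma pf_meas1[measurable]: "(\<lambda>z. phi_fold z \<mu>) \<in> borel_measurable borel"
  unfolding pf_eq by measurable

lemma pf_int: "integrable lborel (\<lambda>z. phi_fold z \<mu>)"
  unfolding pf_eq by simp

lemma pf_int_S: "S \<in> sets borel \<Longrightarrow> integrable lborel (\<lambda>z. indicator S z * phi_fold z \<mu>)"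
proof -
  assume "S \<in> sets borel"
  then have "integrable lborel (\<lambda>z. phi_fold z \<mu> * indicator S z)"
    by (intro integrable_real_mult_indicator pf_int) auto
  then show ?thesis by (simp add: mult.commute)
qed

lemma Phi_alt: "Phi S \<mu> = (\<integral>z. indicator S z * phi_fold z \<mu> \<partial>lborel)"
  by (simp add: Phi_def set_lebesgue_integral_def)

lemma Phi_nn: assumes "S \<in> sets borel"
  shows "ennreal (Phi S \<mu>) = (\<integral>\<^sup>+z. ennreal (indicator S z * phi_fold z \<mu>) \<partial>lborel)"
  unfolding Phi_alt
  by (rule nn_integral_eq_integral[symmetric]) (auto intro: pf_int_S[OF assms] simp: pf_nonneg)

lemma Phi_meas[measurable]: assumes [measurable]: "S \<in> sets borel"
  shows "(\<lambda>\<mu>. Phi S \<mu>) \<in> borel_measurable borel"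
  unfolding Phi_alt
  by measurable

lemma Phi_le: assumes "S \<in> sets borel" shows "Phi S \<mu> \<le> 2"
proof -
  have "Phi S \<mu> \<le> (\<integral>z. phi_fold z \<mu> \<partial>lborel)"
    unfolding Phi_alt
    by (intro integral_mono pf_int_S assms pf_int) (auto simp: indicator_def pf_nonneg)
  also have "\<dots> = 2" unfolding pf_eq by (subst Bochner_Integration.integral_add) auto
  finally show ?thesis .
qed

lemma Phi_nonneg: "S \<in> sets borel \<Longrightarrow> 0 \<le> Phi S \<mu>"
  unfolding Phi_alt by (intro integral_nonneg_AE) (auto simp: pf_nonneg)

lemma Phi_pos: assumes S: "S \<in> sets borel" and pos: "emeasure lborel S > 0"
  shows "0 < Phi S \<mu>"
proof -
  have "(\<integral>\<^sup>+z. ennreal (indicator S z * phi_fold z \<mu>) \<partial>lborel) \<noteq> 0"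
  proof
    assume "(\<integral>\<^sup>+z. ennreal (indicator S z * phi_fold z \<mu>) \<partial>lborel) = 0"
    then have "AE z in lborel. ennreal (indicator S z * phi_fold z \<mu>) = 0"
      using S by (subst (asm) nn_integral_0_iff_AE) auto
    then have "AE z in lborel. z \<notin> S"
      by eventually_elim (use pf_pos in \<open>auto simp: indicator_def ennreal_eq_0_iff not_le[symmetric]\<close>)
    then have "emeasure lborel S = 0"
      using S by (subst (asm) AE_iff_measurable[of S]) auto
    with pos show False by simp
  qed
  then have "ennreal (Phi S \<mu>) \<noteq> 0" using Phi_nn[OF S] by simp
  then show ?thesis using Phi_nonneg[OF S, of \<mu>] by (simp add: less_le)
qed

lemma pf_meas_comp[measurable]:
  assumes [measurable]: "f \<in> borel_measurable M" "g \<in> borel_measurable M"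
  shows "(\<lambda>x. phi_fold (f x) (g x)) \<in> borel_measurable M"
  unfolding pf_eq normal_density_def by measurable

lemma Phi_meas_comp[measurable]:
  assumes "S \<in> sets borel" "g \<in> borel_measurable M"
  shows "(\<lambda>x. Phi S (g x)) \<in> borel_measurable M"
  by (rule measurable_compose[OF assms(2) Phi_meas[OF assms(1)]])

lemma Phi_nonneg_half: "Phi {0..} \<mu> = 1"
proof -
  have i1: "integrable lborel (\<lambda>z. normal_density m 1 z * indicator A z)" if "A \<in> sets borel" for m A
    using that by (intro integrable_real_mult_indicator) auto
  have i2: "integrable lborel (\<lambda>z. indicator A z * normal_density m 1 z)" if "A \<in> sets borel" for m A
    using i1[OF that, of m] by (simp add: mult.commute)
  have "Phi {0..} \<mu> = (\<integral>z. normal_density \<mu> 1 z * indicator {0..} z \<partial>lborel)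
      + (\<integral>z. normal_density (-\<mu>) 1 z * indicator {0..} z \<partial>lborel)"
    unfolding Phi_alt pf_eq
    by (subst Bochner_Integration.integral_add[symmetric]) (auto intro!: i1 i2 Bochner_Integration.integral_cong simp: algebra_simps)
  also have "(\<integral>z. normal_density (-\<mu>) 1 z * indicator {0..} z \<partial>lborel)
     = (\<integral>z. normal_density \<mu> 1 z * indicator {..0} z \<partial>lborel)"
    by (subst lborel_integral_real_affine[where c="-1" and t=0])
       (auto simp: phi_neg[symmetric] phi_def indicator_def intro!: Bochner_Integration.integral_cong)
  also have "\<dots> = (\<integral>z. normal_density \<mu> 1 z * indicator {..<0} z \<partial>lborel)"
    by (rule integral_cong_AE) (auto intro!: eventually_mono[OF AE_lborel_singleton[of 0]] simp: indicator_def)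
  also have "(\<integral>z. normal_density \<mu> 1 z * indicator {0..} z \<partial>lborel) + \<dots>
     = (\<integral>z. normal_density \<mu> 1 z \<partial>lborel)"
  proof -
    have "\<And>z. normal_density \<mu> 1 z * indicator {0..} z + normal_density \<mu> 1 z * indicator {..<0} z
        = normal_density \<mu> 1 z" by (simp split: split_indicator)
    then show ?thesis
      by (subst Bochner_Integration.integral_add[symmetric]) (auto intro!: i1)
  qed
  finally show ?thesis by simp
qed

lemma fn_emeasure: assumes "A \<in> sets borel"
  shows "emeasure (folded_normal \<mu>) A = ennreal (Phi (A \<inter> {0..}) \<mu>)"
  unfolding folded_normal_def using assms
  by (subst emeasure_density) (auto simp: Phi_nn intro!: nn_integral_cong split: split_indicator)

lemma sets_fn[simp]: "sets (folded_normal \<mu>) = sets borel"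
  by (simp add: folded_normal_def)

lemma space_fn[simp]: "space (folded_normal \<mu>) = UNIV"
  by (simp add: folded_normal_def)

lemma fn_kernel: "folded_normal \<in> measurable borel (subprob_algebra borel)"
proof (rule measurable_subprob_algebra)
  fix a :: real
  show "subprob_space (folded_normal a)"
    by (rule subprob_spaceI) (auto simp: fn_emeasure Phi_nonneg_half)
next
  fix A :: "real set" assume [measurable]: "A \<in> sets borel"
  show "(\<lambda>a. emeasure (folded_normal a) A) \<in> borel_measurable borel"
    by (subst fn_emeasure) auto
qed auto

definition K :: "real set \<Rightarrow> real \<Rightarrow> real measure" where
  "K S \<mu> = density lborel (\<lambda>z. ennreal (indicator S z * phi_fold z \<mu> / Phi S \<mu>))"

lemma K_emeasure: assumes S: "S \<in> sets borel" "emeasure lborel S > 0" and A: "A \<in> sets borel"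
  shows "emeasure (K S \<mu>) A = ennreal (Phi (S \<inter> A) \<mu> / Phi S \<mu>)"
proof -
  have P: "0 < Phi S \<mu>" by (rule Phi_pos[OF S])
  have "emeasure (K S \<mu>) A = (\<integral>\<^sup>+z. ennreal (indicator (S \<inter> A) z * phi_fold z \<mu>) / ennreal (Phi S \<mu>) \<partial>lborel)"
    unfolding K_def using S A P
    by (subst emeasure_density) (auto intro!: nn_integral_cong simp: divide_ennreal pf_nonneg split: split_indicator)
  also have "\<dots> = ennreal (Phi (S \<inter> A) \<mu>) / ennreal (Phi S \<mu>)"
    using S A by (subst nn_integral_divide) (auto simp: Phi_nn)
  also have "\<dots> = ennreal (Phi (S \<inter> A) \<mu> / Phi S \<mu>)"
    using P S A by (intro divide_ennreal Phi_nonneg) auto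
  finally show ?thesis .
qed

lemma sets_K[simp]: "sets (K S \<mu>) = sets borel"
  by (simp add: K_def)

lemma K_kernel: assumes S[measurable]: "S \<in> sets borel" and pos: "emeasure lborel S > 0"
  shows "K S \<in> measurable borel (subprob_algebra borel)"
proof (rule measurable_subprob_algebra)
  fix a :: real
  show "subprob_space (K S a)"
  proof (rule subprob_spaceI)
    have "space (K S a) = UNIV" by (simp add: K_def)
    then show "emeasure (K S a) (space (K S a)) \<le> 1" "space (K S a) \<noteq> {}"
      using Phi_pos[OF S pos, of a] by (auto simp: K_emeasure[OF S pos])
  qed
next
  fix A :: "real set" assume [measurable]: "A \<in> sets borel"
  show "(\<lambda>a. emeasure (K S a) A) \<in> borel_measurable borel"
    by (subst K_emeasure[OF S pos]) auto
qed auto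

theorem theorem3:
  fixes S :: "real set" and G :: "real measure" and \<nu> \<delta> :: "real \<Rightarrow> real"
    and n :: nat and I :: "(nat \<Rightarrow> real) \<Rightarrow> real set"
  assumes S_meas: "S \<in> sets borel"
    and S_nonneg: "S \<subseteq> {0..}"
    and S_pos: "emeasure lborel S > 0"
    and G_prob: "prob_space G" and G_sets: "sets G = sets borel"
    and \<nu>_meas: "\<nu> \<in> borel_measurable borel" and \<delta>_meas: "\<delta> \<in> borel_measurable borel"
    and \<nu>_int: "integrable G \<nu>" and \<delta>_int: "integrable G \<delta>"
    and I_interval: "\<And>x. is_interval (I x)"
    and I_meas: "\<And>t. {x \<in> space (PiM {..<n} (\<lambda>_. borel)). t \<in> I x}
                        \<in> sets (PiM {..<n} (\<lambda>_. borel :: real measure))"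
  shows "measure (PiM {..<n} (\<lambda>_. end_trunc_obs S G))
           {x \<in> space (PiM {..<n} (\<lambda>_. end_trunc_obs S G)). ratio_fun \<nu> \<delta> G \<in> I x}
       = measure (PiM {..<n} (\<lambda>_. per_unit_obs S (Tilt S G)))
           {x \<in> space (PiM {..<n} (\<lambda>_. per_unit_obs S (Tilt S G))).
              tilt_fun S \<nu> \<delta> (Tilt S G) \<in> I x}"
proof -
  interpret G: prob_space G by fact
  have spG: "space G = UNIV" using sets_eq_imp_space_eq[OF G_sets] by simp
  have mG: "\<And>N. measurable G N = measurable borel N" by (rule measurable_cong_sets[OF G_sets refl])
  have Pp: "\<And>\<mu>. 0 < Phi S \<mu>" using Phi_pos S_meas S_pos by blast
  define c where "c = (\<integral>\<mu>. Phi S \<mu> \<partial>G)"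
  have PmG[measurable]: "Phi S \<in> borel_measurable G" using Phi_meas[OF S_meas] by (simp add: mG)
  have intP: "integrable G (Phi S)"
    by (rule G.integrable_const_bound[where B=2]) (auto simp: Phi_le[OF S_meas] abs_of_nonneg Phi_nonneg[OF S_meas])
  have c_nn: "0 \<le> c" unfolding c_def by (intro integral_nonneg_AE) (auto simp: Phi_nonneg[OF S_meas])
  have c_ne: "c \<noteq> 0"
  proof
    assume "c = 0"
    then have "AE \<mu> in G. Phi S \<mu> = 0" unfolding c_def
      using intP by (subst (asm) integral_nonneg_eq_0_iff_AE) (auto simp: Phi_nonneg[OF S_meas])
    then have "AE \<mu> in G. False" by eventually_elim (use Pp in \<open>auto simp: less_le\<close>)
    then show False by (simp add: G.AE_False)
  qed
  have c_pos: "0 < c" using c_nn c_ne by simp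
  have Tilt_eq: "Tilt S G = density G (\<lambda>\<mu>. ennreal (Phi S \<mu> / c))" unfolding Tilt_def c_def ..
  have gen: "(\<integral>\<mu>. f \<mu> / Phi S \<mu> \<partial>Tilt S G) = (\<integral>\<mu>. f \<mu> \<partial>G) / c"
    if fm: "f \<in> borel_measurable borel" for f
  proof -
    have [measurable]: "f \<in> borel_measurable G" using fm by (simp add: mG)
    have "(\<integral>\<mu>. f \<mu> / Phi S \<mu> \<partial>Tilt S G) = (\<integral>\<mu>. (Phi S \<mu> / c) *\<^sub>R (f \<mu> / Phi S \<mu>) \<partial>G)"
      unfolding Tilt_eq
      by (rule integral_density) (auto simp: c_nn Phi_nonneg[OF S_meas])
    also have "\<dots> = (\<integral>\<mu>. f \<mu> / c \<partial>G)"
      using Pp by (intro Bochner_Integration.integral_cong) (auto simp: field_simps less_le)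
    also have "\<dots> = (\<integral>\<mu>. f \<mu> \<partial>G) / c" by simp
    finally show ?thesis .
  qed
  have R: "tilt_fun S \<nu> \<delta> (Tilt S G) = ratio_fun \<nu> \<delta> G"
    unfolding tilt_fun_def ratio_fun_def gen[OF \<nu>_meas] gen[OF \<delta>_meas] using c_ne by simp
  define M0 where "M0 = bind G folded_normal"
  have fnG: "folded_normal \<in> measurable G (subprob_algebra borel)" using fn_kernel by (simp add: mG)
  have sM0: "sets M0 = sets borel" unfolding M0_def by (rule sets_bind) (auto simp: spG)
  have eM0: "emeasure M0 B = (\<integral>\<^sup>+\<mu>. ennreal (Phi B \<mu>) \<partial>G)" if "B \<in> sets borel" "B \<subseteq> S" for B
  proof -
    have "B \<inter> {0..} = B" using that S_nonneg by auto
    then show ?thesis unfolding M0_def using that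
      by (subst emeasure_bind[OF _ fnG]) (auto simp: spG fn_emeasure)
  qed
  have ES: "emeasure M0 S = ennreal c"
    unfolding eM0[OF S_meas order_refl] c_def
    by (rule nn_integral_eq_integral[OF intP]) (auto simp: Phi_nonneg[OF S_meas])
  have KT: "K S \<in> measurable (Tilt S G) (subprob_algebra borel)"
  proof -
    have "sets (Tilt S G) = sets borel" by (simp add: Tilt_def G_sets)
    then have eqT: "measurable (Tilt S G) (subprob_algebra borel) = measurable borel (subprob_algebra borel)"
      by (rule measurable_cong_sets) simp
    show ?thesis unfolding eqT by (rule K_kernel[OF S_meas S_pos])
  qed
  have spT: "space (Tilt S G) = UNIV" by (simp add: Tilt_def spG)
  have PU: "per_unit_obs S (Tilt S G) = bind (Tilt S G) (K S)"
    unfolding per_unit_obs_def K_def[abs_def] ..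
  have E: "end_trunc_obs S G = per_unit_obs S (Tilt S G)"
    unfolding PU
  proof (rule measure_eqI)
    show "sets (end_trunc_obs S G) = sets (Tilt S G \<bind> K S)"
      unfolding end_trunc_obs_def Let_def M0_def[symmetric]
      by (simp add: sM0, subst sets_bind) (auto simp: spT)
  next
    fix A assume "A \<in> sets (end_trunc_obs S G)"
    then have A[measurable]: "A \<in> sets borel"
      unfolding end_trunc_obs_def Let_def M0_def[symmetric] by (simp add: sM0)
    have SA: "S \<inter> A \<in> sets borel" using S_meas A by auto
    have gm: "(\<lambda>z. indicator S z / ennreal c) \<in> borel_measurable M0"
      unfolding measurable_cong_sets[OF sM0 refl] using S_meas by measurable
    have "emeasure (end_trunc_obs S G) A = (\<integral>\<^sup>+z. indicator (S \<inter> A) z / ennreal c \<partial>M0)"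
      unfolding end_trunc_obs_def Let_def M0_def[symmetric] ES
      using S_meas by (subst emeasure_density[OF gm]) (auto simp: sM0 intro!: nn_integral_cong split: split_indicator)
    also have "\<dots> = emeasure M0 (S \<inter> A) / ennreal c"
      using SA by (subst nn_integral_divide) (auto simp: sM0 measurable_cong_sets[OF sM0 refl])
    also have "\<dots> = (\<integral>\<^sup>+\<mu>. ennreal (Phi (S \<inter> A) \<mu>) \<partial>G) / ennreal c"
      using SA by (subst eM0) auto
    finally have L: "emeasure (end_trunc_obs S G) A = (\<integral>\<^sup>+\<mu>. ennreal (Phi (S \<inter> A) \<mu>) \<partial>G) / ennreal c" .
    have "emeasure (Tilt S G \<bind> K S) A = (\<integral>\<^sup>+\<mu>. emeasure (K S \<mu>) A \<partial>Tilt S G)"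
      using A by (subst emeasure_bind[OF _ KT]) (auto simp: spT)
    also have "\<dots> = (\<integral>\<^sup>+\<mu>. ennreal (Phi (S \<inter> A) \<mu> / Phi S \<mu>) \<partial>Tilt S G)"
      by (simp add: K_emeasure[OF S_meas S_pos A])
    also have "\<dots> = (\<integral>\<^sup>+\<mu>. ennreal (Phi S \<mu> / c) * ennreal (Phi (S \<inter> A) \<mu> / Phi S \<mu>) \<partial>G)"
    proof -
      have m1: "(\<lambda>\<mu>. ennreal (Phi (S \<inter> A) \<mu> / Phi S \<mu>)) \<in> borel_measurable G"
        unfolding mG using SA S_meas by measurable
      have m2: "(\<lambda>\<mu>. ennreal (Phi S \<mu> / c)) \<in> borel_measurable G"
        unfolding mG using S_meas by measurable
      show ?thesis unfolding Tilt_eq by (rule nn_integral_density[OF m2 m1])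
    qed
    also have "\<dots> = (\<integral>\<^sup>+\<mu>. ennreal (Phi (S \<inter> A) \<mu>) / ennreal c \<partial>G)"
    proof (rule nn_integral_cong)
      fix \<mu>
      have "ennreal (Phi S \<mu> / c) * ennreal (Phi (S \<inter> A) \<mu> / Phi S \<mu>)
          = ennreal (Phi S \<mu> / c * (Phi (S \<inter> A) \<mu> / Phi S \<mu>))"
        using c_pos Pp[of \<mu>] Phi_nonneg[OF SA, of \<mu>] by (subst ennreal_mult) auto
      also have "Phi S \<mu> / c * (Phi (S \<inter> A) \<mu> / Phi S \<mu>) = Phi (S \<inter> A) \<mu> / c"
        using Pp[of \<mu>] by (simp add: field_simps)
      also have "ennreal (Phi (S \<inter> A) \<mu> / c) = ennreal (Phi (S \<inter> A) \<mu>) / ennreal c"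
        using c_pos Phi_nonneg[OF SA, of \<mu>] by (simp add: divide_ennreal)
      finally show "ennreal (Phi S \<mu> / c) * ennreal (Phi (S \<inter> A) \<mu> / Phi S \<mu>) = ennreal (Phi (S \<inter> A) \<mu>) / ennreal c" .
    qed
    also have "\<dots> = (\<integral>\<^sup>+\<mu>. ennreal (Phi (S \<inter> A) \<mu>) \<partial>G) / ennreal c"
      using SA by (subst nn_integral_divide) (auto simp: mG)
    finally show "emeasure (end_trunc_obs S G) A = emeasure (Tilt S G \<bind> K S) A" using L by simp
  qed
  show ?thesis by (simp only: E R)
qed

end
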